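(* Let $$Q_1(x) = x^{q^2+1} + 1 + x^t\, R(x) + x^t \sum_{j=0}^{\log_2\sqrt{q/2}\,-1} x^{2^j(\sqrt{2q}-2)t}\,\bigl(1 + x^{\sqrt{2q}\,t}\bigr)^{2^j-1},$$ where $$R(x) = \frac{1 + x^{\sqrt{2q}\,t(\sqrt{q/2}-1)}}{1 + x^{\sqrt{2q}\,t}} = \sum_{i=0}^{\sqrt{q/2}-2} x^{i\sqrt{2q}\,t}$$ (a polynomial over $\mathbb{F}_2$). Then the set of solutions of $Q_1(x) = 0$ is exactly $\mathcal{T}_1$.
   Context: Let $q = 2^m$ with $m \ge 3$ odd, so that $\sqrt{2q} = 2^{(m+1)/2}$ and $\sqrt{q/2} = 2^{(m-1)/2}$ are integers. Let $E = \mathbb{F}_{q^4}$, and put $s = q - \sqrt{2q} + 1$ and $t = q + \sqrt{2q} + 1$. Let $\mathcal{O}_s = \{x \in E \mid x^s = 1\}$ and $\mathcal{O}_t = \{x \in E \mid x^t = 1\}$. Define $$\mathcal{T}_1 = \mathcal{O}_t \cup \left\{\left(u^{q-1} + u^{-(q-1)}\right)^{q-1} uv \;\middle|\; u \in \mathcal{O}_s \setminus \{1\},\ v \in \mathcal{O}_t\right\}.$$ *)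

theory Defs
  imports Main
begin

text \<open>Parameters: q = 2^m with m odd, m >= 3.\<close>

definition qq :: "nat \<Rightarrow> nat" where "qq m = 2 ^ m"
definition sqrt2q :: "nat \<Rightarrow> nat" where "sqrt2q m = 2 ^ ((m + 1) div 2)"
definition sqrthq :: "nat \<Rightarrow> nat" where "sqrthq m = 2 ^ ((m - 1) div 2)"
definition ss :: "nat \<Rightarrow> nat" where "ss m = qq m - sqrt2q m + 1"
definition tt :: "nat \<Rightarrow> nat" where "tt m = qq m + sqrt2q m + 1"

definition logsqrthq :: "nat \<Rightarrow> nat" where "logsqrthq m = (m - 1) div 2"

definition Os :: "nat \<Rightarrow> 'a::field set" where "Os m = {x. x ^ ss m = 1}"
definition Ot :: "nat \<Rightarrow> 'a::field set" where "Ot m = {x. x ^ tt m = 1}"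

definition T1 :: "nat \<Rightarrow> 'a::field set" where
  "T1 m = Ot m \<union>
     {(u ^ (qq m - 1) + inverse u ^ (qq m - 1)) ^ (qq m - 1) * u * v | u v.
        u \<in> Os m - {1} \<and> v \<in> Ot m}"

definition Rpoly :: "nat \<Rightarrow> 'a::field \<Rightarrow> 'a" where
  "Rpoly m x = (\<Sum>i = 0 .. sqrthq m - 2. x ^ (i * sqrt2q m * tt m))"

definition Q1 :: "nat \<Rightarrow> 'a::field \<Rightarrow> 'a" where
  "Q1 m x = x ^ (qq m ^ 2 + 1) + 1 + x ^ tt m * Rpoly m x
     + x ^ tt m * (\<Sum>j < logsqrthq m.
          x ^ (2 ^ j * (sqrt2q m - 2) * tt m) * (1 + x ^ (sqrt2q m * tt m)) ^ (2 ^ j - 1))"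

end

theory Submission
  imports Defs "HOL-Computational_Algebra.Polynomial"
begin

lemma c2_neg: fixes x :: "'a::field" assumes "(2::'a) = 0" shows "- x = x"
proof -
  have "x + x = 2 * x" by simp
  then have "x + x = 0" using assms by simp
  then show ?thesis by (simp add: add_eq_0_iff)
qed

lemma c2_minus: fixes x y :: "'a::field" assumes "(2::'a) = 0" shows "x - y = x + y"
  using c2_neg[OF assms, of y] by (metis diff_conv_add_uminus)

lemma frob: fixes x y :: "'a::field" assumes "(2::'a) = 0"
  shows "(x + y) ^ (2 ^ n) = x ^ (2 ^ n) + y ^ (2 ^ n)"
proof (induction n)
  case 0 then show ?case by simp
next
  case (Suc n)
  have "(x + y) ^ (2 ^ Suc n) = ((x+y)^(2^n))^2" by (simp add: power_mult[symmetric] mult.commute)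
  also have "\<dots> = (x^(2^n) + y^(2^n))^2" using Suc by simp
  also have "\<dots> = (x^(2^n))^2 + (y^(2^n))^2" using assms by (simp add: power2_sum)
  also have "\<dots> = x ^ (2 ^ Suc n) + y ^ (2 ^ Suc n)" by (simp add: power_mult[symmetric] mult.commute)
  finally show ?case .
qed

lemma frob_inj: fixes x y :: "'a::field" assumes "(2::'a) = 0" and "x ^ (2^n) = y ^ (2^n)"
  shows "x = y"
proof -
  have "(x + y) ^ (2^n) = 0" using frob[OF assms(1)] assms(2) c2_minus[OF assms(1)]
    by (metis diff_self)
  then have "x + y = 0" by simp
  then show ?thesis using c2_minus[OF assms(1)] by (metis diff_eq_eq add_0)
qed

lemma fermat_field: fixes x :: "'a::{field,finite}" assumes "x \<noteq> 0"
  shows "x ^ (card (UNIV::'a set) - 1) = 1"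
proof -
  let ?S = "UNIV - {0::'a}"
  have bij: "bij_betw ((*) x) ?S ?S"
    by (rule bij_betw_byWitness[where f'="(*) (inverse x)"]) (use assms in auto)
  have "prod (\<lambda>y. x * y) ?S = prod id ?S"
    using prod.reindex_bij_betw[OF bij, of id] by simp
  moreover have "prod (\<lambda>y. x * y) ?S = x ^ card ?S * prod id ?S"
    by (simp add: prod.distrib)
  moreover have "prod id ?S \<noteq> 0" by simp
  ultimately have "x ^ card ?S = 1" by simp
  moreover have "card ?S = card (UNIV::'a set) - 1" by (simp add: card_Diff_singleton)
  ultimately show ?thesis by simp
qed

lemma char2_card: assumes "card (UNIV::'a::{field,finite} set) = 2 ^ n" and "n > 0"
  shows "(2::'a) = 0"
proof -
  have "(-1::'a) ^ (card (UNIV::'a set) - 1) = 1" by (rule fermat_field) simp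
  moreover have "odd (card (UNIV::'a set) - 1)" using assms by simp
  ultimately have "(-1::'a) = 1" by simp
  then have "(1::'a) + 1 = 0" by (metis add.right_inverse)
  then show ?thesis by simp
qed

lemma roots_unity_card: fixes n :: nat
  assumes "n dvd (card (UNIV::'a::{field,finite} set) - 1)" "n > 0"
  shows "n \<le> card {x::'a. x ^ n = 1}"
proof -
  define Q where "Q = card (UNIV::'a set)"
  define d where "d = (Q - 1) div n"
  have Qd: "Q - 1 = d * n" using assms unfolding d_def Q_def by simp
  have Q1: "Q \<ge> 2"
  proof -
    have "card {0::'a, 1} \<le> card (UNIV::'a set)" by (rule card_mono) auto
    then show ?thesis by (simp add: Q_def)
  qed
  then have dpos: "d > 0" using Qd by (cases d) auto
  define H :: "'a poly" where "H = (\<Sum>i<d. monom 1 (i*n))"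
  have polyH: "poly H x = (\<Sum>i<d. (x^n)^i)" for x
  proof -
    have "x^(i*n) = (x^n)^i" for i by (metis power_mult mult.commute)
    then show ?thesis by (simp add: H_def poly_sum poly_monom)
  qed
  have "poly H 0 = 1" unfolding polyH using dpos assms(2)
    by (simp add: power_0_left sum.delta)
  then have H0: "H \<noteq> 0" by auto
  have degH: "degree H \<le> (d - 1) * n" unfolding H_def
  proof (rule degree_sum_le)
    fix i assume "i \<in> {..<d}"
    then have "i * n \<le> (d - 1) * n" by (intro mult_le_mono1) auto
    then show "degree (monom (1::'a) (i * n)) \<le> (d - 1) * n" by (simp add: degree_monom_eq)
  qed simp
  have sub: "UNIV - {0} \<subseteq> {x::'a. x ^ n = 1} \<union> {x. poly H x = 0}"
  proof
    fix x :: 'a assume "x \<in> UNIV - {0}"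
    then have "x ^ (Q - 1) = 1" unfolding Q_def by (intro fermat_field) auto
    moreover have "(x^n)^d = x^(Q-1)" unfolding Qd by (metis power_mult mult.commute)
    ultimately have "(x^n)^d - 1 = 0" by simp
    then have "(x^n - 1) * poly H x = 0" by (simp add: polyH power_diff_1_eq)
    then show "x \<in> {x::'a. x ^ n = 1} \<union> {x. poly H x = 0}" by auto
  qed
  have "Q - 1 = card (UNIV - {0::'a})" unfolding Q_def by (simp add: card_Diff_singleton)
  also have "\<dots> \<le> card ({x::'a. x ^ n = 1} \<union> {x. poly H x = 0})" by (rule card_mono[OF _ sub]) simp
  also have "\<dots> \<le> card {x::'a. x ^ n = 1} + card {x. poly H x = 0}" by (rule card_Un_le)
  also have "\<dots> \<le> card {x::'a. x ^ n = 1} + (d - 1) * n"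
    using card_poly_roots_bound[OF H0] degH by simp
  finally have "d * n \<le> card {x::'a. x ^ n = 1} + (d - 1) * n" using Qd by simp
  then show ?thesis using dpos by (cases d) auto
qed

lemma c2_cancel: fixes x y z :: "'a::field" assumes "(2::'a) = 0" "x = y + 2 * z" shows "x = y"
  using assms by simp

lemma c2_sum0: fixes x y :: "'a::field" assumes "(2::'a) = 0" shows "x + y = 0 \<longleftrightarrow> x = y"
  using c2_minus[OF assms, of x y] by (metis eq_iff_diff_eq_0)

lemma c2_double: fixes x :: "'a::field" assumes "(2::'a) = 0" shows "x + x = 0"
  by (metis assms mult_2 mult_zero_left)

definition Fm :: "nat \<Rightarrow> nat \<Rightarrow> nat \<Rightarrow> 'a::field \<Rightarrow> 'a" where
  "Fm r sh L y = y * (\<Sum>i = 0..sh-2. y^(i*r)) + y * (\<Sum>j<L. y^(2^j*(r-2)) * (1 + y^r)^(2^j-1))"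

lemma Fm_mult:
  fixes y :: "'a::field"
  assumes two: "(2::'a) = 0" and "r * sh = q" "sh \<ge> 2"
  shows "(1 + y^r) * Fm r sh L y = y * (1 + y^(q-r)) + y * (\<Sum>j<L. (y^(r-2)*(1+y^r))^(2^j))"
proof -
  have set: "{0..sh-2} = {..<sh-1}" using assms(3) by auto
  have "(\<Sum>i = 0..sh-2. y^(i*r)) = (\<Sum>i<sh-1. (y^r)^i)"
    unfolding set by (simp add: power_mult[symmetric] mult.commute)
  then have "(1+y^r) * (\<Sum>i = 0..sh-2. y^(i*r)) = 1 + (y^r)^(sh-1)"
    using one_diff_power_eq[of "y^r" "sh-1"] c2_minus[OF two] by simp
  also have "(y^r)^(sh-1) = y^(q-r)"
    using assms(2) by (simp add: power_mult[symmetric] diff_mult_distrib2)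
  finally have s1: "(1+y^r) * (\<Sum>i = 0..sh-2. y^(i*r)) = 1 + y^(q-r)" .
  have s2: "(1+y^r) * (y^(2^j*(r-2)) * (1 + y^r)^(2^j-1)) = (y^(r-2)*(1+y^r))^(2^j)" for j
  proof -
    have "(1+y^r) * (1 + y^r)^(2^j-1) = (1+y^r)^(2^j)"
      by (metis power_Suc Suc_pred' zero_less_power zero_less_numeral)
    moreover have "y^(2^j*(r-2)) = (y^(r-2))^(2^j)" by (simp add: power_mult[symmetric] mult.commute)
    ultimately have "(1+y^r) * (y^(2^j*(r-2)) * (1 + y^r)^(2^j-1)) = (y^(r-2))^(2^j) * (1+y^r)^(2^j)"
      by (metis mult.left_commute)
    then show ?thesis by (simp only: power_mult_distrib)
  qed
  have "(1 + y^r) * Fm r sh L y = y * ((1+y^r) * (\<Sum>i = 0..sh-2. y^(i*r)))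
        + y * (\<Sum>j<L. (1+y^r) * (y^(2^j*(r-2)) * (1 + y^r)^(2^j-1)))"
    unfolding Fm_def by (simp add: algebra_simps sum_distrib_left)
  also have "\<dots> = y * (1 + y^(q-r)) + y * (\<Sum>j<L. (y^(r-2)*(1+y^r))^(2^j))"
    unfolding s1 s2 ..
  finally show ?thesis .
qed

lemma telescope:
  fixes g :: "'a::field" assumes two: "(2::'a) = 0"
  shows "(\<Sum>j<n. (g + g^2)^(2^j)) = g + g^(2^n)"
proof (induction n)
  case 0 then show ?case by (simp add: c2_double[OF two])
next
  case (Suc n)
  have "(g + g^2)^(2^n) = g^(2^n) + g^(2^Suc n)"
    by (simp add: frob[OF two] power_mult[symmetric] mult.commute)
  then show ?case using Suc two by (simp add: c2_double[OF two] add.assoc[symmetric])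
qed
lemma Iw: fixes u b :: "'a::field" assumes two: "(2::'a) = 0" and "u \<noteq> 0" "b \<noteq> 0" "1 + u \<noteq> 0" "1 + b \<noteq> 0" "u + b \<noteq> 0" "u^2 + b \<noteq> 0"
  shows "(u*(1+b)/(u^2+b))^2 * (b/u^2 + u^2/b) = 1/b + b"
proof -
  have "(u*(1+b)/(u^2+b))^2 * (b/u^2 + u^2/b) = 1/b + b + 2 * ((b^2 + (-1)*u^2 + (-1)*u^2*b^2 + u^4) / ((b + u^2)*(b + u^2)))"
    using assms(2-) apply (simp add: divide_simps)
    by algebra
  then show ?thesis using two by simp
qed

lemma Ixt: fixes u b :: "'a::field" assumes two: "(2::'a) = 0" and "u \<noteq> 0" "b \<noteq> 0" "1 + u \<noteq> 0" "1 + b \<noteq> 0" "u + b \<noteq> 0" "u^2 + b \<noteq> 0"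
  shows "((u+b)/(1+u))^2 * (b^2 + (b/u)^2) = b^2 * (1 + (b/u)^2)"
proof -
  have "((u+b)/(1+u))^2 * (b^2 + (b/u)^2) = b^2 * (1 + (b/u)^2) + 2 * ((b^3 + (-1)*b^4 + (-1)*u^2*b^2 + u^2*b^3) / ((1 + u)*(1 + u)*(u)))"
    using assms(2-) apply (simp add: divide_simps)
    by algebra
  then show ?thesis using two by simp
qed

lemma Inz: fixes u b :: "'a::field" assumes two: "(2::'a) = 0" and "u \<noteq> 0" "b \<noteq> 0" "1 + u \<noteq> 0" "1 + b \<noteq> 0" "u + b \<noteq> 0" "u^2 + b \<noteq> 0"
  shows "1 + ((b + (b/u)^2)/(1+b)) = (u+b)^2/(u^2*(1+b))"
proof -
  have "1 + ((b + (b/u)^2)/(1+b)) = (u+b)^2/(u^2*(1+b)) + 2 * (((-1)*b + u*b) / ((u)*(1 + b)))"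
    using assms(2-) apply (simp add: divide_simps)
    by algebra
  then show ?thesis using two by simp
qed

lemma I2: fixes u b :: "'a::field" assumes two: "(2::'a) = 0" and "u \<noteq> 0" "b \<noteq> 0" "1 + u \<noteq> 0" "1 + b \<noteq> 0" "u + b \<noteq> 0" "u^2 + b \<noteq> 0"
  shows "((b + (b/u)^2)/(1+b)) / ((u+b)/(1+u))^2 * (1 + ((b + (b/u)^2)/(1+b))) = ((u^2+b)/(u^2*(1+b))) + ((u^2+b)/(u^2*(1+b)))^2"
proof -
  have "((b + (b/u)^2)/(1+b)) / ((u+b)/(1+u))^2 * (1 + ((b + (b/u)^2)/(1+b))) = ((u^2+b)/(u^2*(1+b))) + ((u^2+b)/(u^2*(1+b)))^2 + 2 * (((-1)*b^3 + b^4 + (-2)*u^2*b^2 + 2*u^2*b^3 + (-1)*u^3*b + u^3*b^3 + (-1)*u^4*b + u^4*b^2 + (-1)*u^5 + u^5*b^2) / ((b + u)*(b + u)*(u)*(1 + b)*(u)*(u)*(1 + b)))"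
    using assms(2-) apply (simp add: divide_simps)
    by algebra
  then show ?thesis using two by simp
qed

lemma I1: fixes u b :: "'a::field" assumes two: "(2::'a) = 0" and "u \<noteq> 0" "b \<noteq> 0" "1 + u \<noteq> 0" "1 + b \<noteq> 0" "u + b \<noteq> 0" "u^2 + b \<noteq> 0"
  shows "((u+b)/(1+u)) * (1 + ((b/u + b/u^2)/(1 + b/u)) * (u^2*(1+b)/(b*(u^2+b))) + ((u^2+b)/(u^2*(1+b))) + ((b + b/u)/(b*(1+b/u)))) = (1 + ((b + (b/u)^2)/(1+b))) * (1 + (u*(1+b)/(u^2+b)))"
proof -
  have "((u+b)/(1+u)) * (1 + ((b/u + b/u^2)/(1 + b/u)) * (u^2*(1+b)/(b*(u^2+b))) + ((u^2+b)/(u^2*(1+b))) + ((b + b/u)/(b*(1+b/u)))) = (1 + ((b + (b/u)^2)/(1+b))) * (1 + (u*(1+b)/(u^2+b))) + 2 * (((-1)*b^2 + u^2) / ((1 + u)*(u)*(1 + b)))"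
    using assms(2-) apply (simp add: divide_simps)
    by algebra
  then show ?thesis using two by simp
qed

lemma core:
  fixes u v :: "'a::field"
  assumes two: "(2::'a) = 0"
    and hr: "r = 2^(h+2)" and hsh: "sh = 2^(h+1)" and hq: "q = 2^(2*h+3)" and hL: "L = h+1"
    and hs: "s = q - r + 1" and ht: "t = q + r + 1"
    and us: "u^s = 1" and u1: "u \<noteq> 1" and vt: "v^t = 1"
  defines "w \<equiv> (u^(q-1) + inverse u^(q-1))^(q-1)"
  shows "w \<noteq> 0" "(w*u*v)^t = (w*u^2)^r" "(w*u*v)^(q^2+1) = w^2"
    "(w*u*v)^(q^2+1) + 1 + Fm r sh L ((w*u*v)^t) = 0"
proof -
  define P where "P = (2::nat)^h"
  have P1: "P \<ge> 1" unfolding P_def by simp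
  have rP: "r = 4*P" unfolding hr P_def by (simp add: power_add)
  have shP: "sh = 2*P" unfolding hsh P_def by (simp add: power_add)
  have qP: "q = 8*(P*P)" unfolding hq P_def by (simp add: power_add power_mult[symmetric] mult_2[symmetric] power2_eq_square[symmetric])
  have rq: "r \<le> q" using P1 unfolding rP qP by simp
  have sr: "q + 1 = s + r" using rq hs by simp
  have rr: "r * r = 2 * q" unfolding rP qP by simp
  have rsh: "r * sh = q" unfolding rP qP shP by simp
  have sh2: "sh \<ge> 2" using P1 shP by simp
  have r2: "r \<ge> 2" using P1 rP by simp
  have q1: "q \<ge> 1" using rq r2 by simp
  have spos: "s > 0" using hs by simp
  have tpos: "t > 0" using ht by simp
  have tsr: "t = s + 2*r" using ht sr by simp
  have "s * t + r * r = (s + r) * (s + r)" unfolding tsr by (simp add: algebra_simps)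
  then have "s * t + 2 * q = (q+1)*(q+1)" using rr sr by simp
  then have stN: "s * t = q^2 + 1" by (simp add: algebra_simps power2_eq_square)
  have Nq: "q^2 + 1 = (q+1)*(q-1) + 2" using q1 by (cases q) (auto simp: power2_eq_square algebra_simps)
  have fr: "(x+y)^r = x^r + y^r" for x y :: 'a using frob[OF two, of x y "h+2"] hr by simp
  have fq: "(x+y)^q = x^q + y^q" for x y :: 'a using frob[OF two, of x y "2*h+3"] hq by simp
  have fsh: "(x+y)^sh = x^sh + y^sh" for x y :: 'a using frob[OF two, of x y "h+1"] hsh by simp
  have f4: "(x+y)^4 = x^4 + y^4" for x y :: 'a using frob[OF two, of x y 2] by simp
  have f2: "(x+y)^2 = x^2 + y^2" for x y :: 'a using frob[OF two, of x y 1] by simp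
  define b where "b = u^r"
  have u0: "u \<noteq> 0" using us spos by (auto simp: zero_power)
  have b0: "b \<noteq> 0" unfolding b_def using u0 by simp
  have "u^q * u = u^(q+1)" by simp
  also have "\<dots> = u^(s+r)" using sr by simp
  also have "\<dots> = b" using us by (simp add: power_add b_def)
  finally have uqu: "u^q * u = b" .
  then have R1: "u^q = b/u" using u0 by (simp add: eq_divide_eq)
  have "b^r = u^(r*r)" unfolding b_def by (simp add: power_mult)
  also have "\<dots> = (u^q)^2" unfolding rr by (simp add: power_mult[symmetric] mult.commute)
  finally have R2: "b^r = (b/u)^2" unfolding R1 .
  have "b^q = (u^q)^r" unfolding b_def by (simp add: power_mult[symmetric] mult.commute)
  also have "\<dots> = b^r / u^r" by (simp add: R1 power_divide b_def)
  also have "\<dots> = b/u^2" using b0 u0 by (simp add: R2 b_def[symmetric] power2_eq_square field_simps)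
  finally have R3: "b^q = b/u^2" .
  have "b^sh = u^q" unfolding b_def by (simp add: power_mult[symmetric] rsh)
  then have R5: "b^sh = b/u" using R1 by simp
  have R4: "(u^2)^sh = b" unfolding b_def by (simp add: power_mult[symmetric] rsh shP rP)
  have uq2: "(u^2)^q = (b/u)^2" by (simp add: power_mult[symmetric] mult.commute R1[symmetric])
  have ur2: "(u^2)^r = b^2" unfolding b_def by (simp add: power_mult[symmetric] mult.commute)
  have b1: "b \<noteq> 1"
  proof
    assume "b = 1"
    then have "u^2 = 1" using R2 u0 by (simp add: power_divide)
    then have "(u+1)^2 = 0" using f2 two by simp
    then have "u + 1 = 0" by simp
    then show False using u1 c2_sum0[OF two] by simp
  qed
  have bu: "b \<noteq> u"
  proof
    assume "b = u"
    then have "b^q = 1" using R1 u0 by simp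
    then have "b/u^2 = 1" using R3 by simp
    then show False using u1 u0 \<open>b = u\<close> by (simp add: power2_eq_square)
  qed
  have bu2: "b \<noteq> u^2"
  proof
    assume h: "b = u^2"
    then have "(b/u)^2 = b/u^2" using R3 uq2 by simp
    then have "b^2 = b" using u0 by (simp add: power_divide)
    then show False using b0 b1 by (simp add: power2_eq_square)
  qed
  have nz1: "1 + u \<noteq> 0" using u1 c2_sum0[OF two, of 1 u] by auto
  have nz2: "1 + b \<noteq> 0" using b1 c2_sum0[OF two, of 1 b] by auto
  have nz3: "u + b \<noteq> 0" using bu c2_sum0[OF two, of u b] by auto
  have nz4: "u^2 + b \<noteq> 0" using bu2 c2_sum0[OF two, of "u^2" b] by auto
  note nzs = u0 b0 nz1 nz2 nz3 nz4
  define A where "A = u^(q-1) + inverse u^(q-1)"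
  have wA_def: "w = A^(q-1)" unfolding w_def A_def ..
  have "u^(q-1) * u = u^q" using q1 by (metis power_Suc2 Suc_diff_1 less_le_trans zero_less_one)
  then have "u^(q-1) * u^2 = b" using uqu by (metis mult.assoc power2_eq_square)
  then have uq1: "u^(q-1) = b/u^2" using u0 by (simp add: eq_divide_eq)
  have A_eq: "A = b/u^2 + u^2/b" unfolding A_def power_inverse uq1 by simp
  have "A^q = (b/u^2)^q + (u^2/b)^q" unfolding A_eq fq ..
  also have "\<dots> = 1/b + b" using u0 b0
    by (simp add: power_divide uq2 R3) (simp add: field_simps power2_eq_square)
  finally have Aq: "A^q = 1/b + b" .
  have "(b + u^2)^2 = b^2 + (u^2)^2" using f2 .
  then have "A = (b + u^2)^2/(u^2*b)" using u0 b0 unfolding A_eq by (simp add: field_simps power2_eq_square)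
  then have A0: "A \<noteq> 0" using nz4 u0 b0 by (simp add: add.commute)
  have AqQ: "(A^q)^q = A" unfolding Aq fq using u0 b0 by (simp add: power_divide R3 A_eq)
  have Aq0: "A^q \<noteq> 0" using A0 by simp
  have wA: "w * A = A^q" unfolding wA_def using q1 by (metis power_Suc2 Suc_diff_1 less_le_trans zero_less_one)
  then have w_eq: "w = A^q / A" using A0 by (simp add: eq_divide_eq)
  show w0: "w \<noteq> 0" using w_eq A0 Aq0 by simp
  have "w^q = A / A^q" unfolding w_eq by (simp add: power_divide AqQ)
  then have wq: "w^(q+1) = 1" using w_eq A0 Aq0 by simp
  define W0 where "W0 = u*(1+b)/(u^2+b)"
  have "W0^2 * A = 1/b + b" unfolding W0_def A_eq by (rule Iw[OF two nzs])
  then have W0w: "w = W0^2" using wA Aq A0 by (metis mult_right_cancel)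
  have v0: "v \<noteq> 0" using vt tpos by (auto simp: zero_power)
  have "(w*u*v)^(q^2+1) = w^(q^2+1) * u^(s*t) * v^(s*t)" unfolding stN by (simp add: power_mult_distrib)
  also have "u^(s*t) = 1" by (simp add: power_mult us)
  also have "v^(s*t) = 1" by (metis power_mult mult.commute vt power_one)
  also have "w^(q^2+1) = w^2"
  proof -
    have "w^((q+1)*(q-1)+2) = (w^(q+1))^(q-1) * w^2" by (subst power_add, subst power_mult, rule refl)
    then show ?thesis unfolding Nq wq by simp
  qed
  finally show xN: "(w*u*v)^(q^2+1) = w^2" by simp
  have "(w*u*v)^t = w^(q+1) * w^r * (u^q * u) * u^r * v^t" unfolding ht
    by (simp add: power_mult_distrib power_add algebra_simps)
  also have "\<dots> = w^r * b^2" unfolding wq vt uqu b_def[symmetric] by (simp add: power2_eq_square)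
  finally have xt1: "(w*u*v)^t = w^r * b^2" .
  then show xt2: "(w*u*v)^t = (w*u^2)^r" by (simp add: power_mult_distrib ur2)
  define Y where "Y = (u+b)/(1+u)"
  define D where "D = b^2 + (b/u)^2"
  have D_eq: "D = (u^2+b)^r" unfolding D_def fr ur2 R2 ..
  have D0: "D \<noteq> 0" unfolding D_eq using nz4 by simp
  have W0r: "W0^r = b*(1+(b/u)^2) / D" unfolding W0_def D_eq
    by (simp add: power_divide power_mult_distrib fr b_def[symmetric] R2)
  have "Y^2 * D = b^2 * (1 + (b/u)^2)" unfolding Y_def D_def by (rule Ixt[OF two nzs])
  then have YW: "Y^2 = b * W0^r" using D0 unfolding W0r by (simp add: field_simps power2_eq_square)
  have "w^r = (W0^r)^2" unfolding W0w by (simp only: power_mult[symmetric] mult.commute)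
  then have "(w*u*v)^t = (b*W0^r)^2" using xt1 by (simp add: power_mult_distrib)
  also have "\<dots> = (Y^2)^2" using YW by simp
  finally have xt3: "(w*u*v)^t = Y^4" by simp
  define y where "y = (w*u*v)^t"
  define Yr where "Yr = (b + (b/u)^2)/(1+b)"
  define Yq where "Yq = (b/u + b/u^2)/(1 + b/u)"
  define G where "G = (u^2+b)/(u^2*(1+b))"
  define Gs where "Gs = (b + b/u)/(b*(1+b/u))"
  define iYr where "iYr = u^2*(1+b)/(b*(u^2+b))"
  have YrE: "Y^r = Yr" unfolding Y_def Yr_def by (simp add: power_divide fr b_def[symmetric] R2)
  have YqE: "Y^q = Yq" unfolding Y_def Yq_def by (simp add: power_divide fq R1 R3)
  have GsE: "G^sh = Gs" unfolding G_def Gs_def by (simp add: power_divide power_mult_distrib fsh R4 R5)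
  have iYrE: "iYr * Yr = 1" unfolding iYr_def Yr_def using nzs by (simp add: divide_simps) (simp add: algebra_simps power2_eq_square)
  have Y0: "Y \<noteq> 0" unfolding Y_def using nz1 nz3 by simp
  have yY: "y = Y^4" unfolding y_def xt3 ..
  have y0: "y \<noteq> 0" using Y0 yY by simp
  have yr: "y^r = Yr^4" unfolding yY YrE[symmetric] by (simp add: power_mult[symmetric] mult.commute)
  have yq: "y^q = Yq^4" unfolding yY YqE[symmetric] by (simp add: power_mult[symmetric] mult.commute)
  have "y^(q-r) * y^r = y^q" using rq by (metis power_add le_add_diff_inverse2)
  then have yqrr: "y^(q-r) * Yr^4 = Yq^4" unfolding yr yq .
  have "y^(q-r) = y^(q-r) * (iYr*Yr)^4" using iYrE by simp
  also have "\<dots> = (y^(q-r)*Yr^4)*iYr^4" by (simp add: power_mult_distrib algebra_simps)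
  finally have yqr: "y^(q-r) = Yq^4 * iYr^4" unfolding yqrr .
  have "y^(r-2) * y^2 = y^r" using r2 by (metis power_add le_add_diff_inverse2)
  moreover have y2: "y^2 = Y^8" unfolding yY by (simp add: power_mult[symmetric])
  ultimately have "y^(r-2) * Y^8 = Yr^4" unfolding yr by simp
  then have yr2: "y^(r-2) = Yr^4 / Y^8" using Y0 by (simp add: eq_divide_eq)
  have "Yr / Y^2 * (1 + Yr) = G + G^2" unfolding Yr_def Y_def G_def by (rule I2[OF two nzs])
  then have "(Yr / Y^2 * (1 + Yr))^4 = G^4 + (G^4)^2" by (simp add: f4 power_mult[symmetric] mult.commute)
  moreover have "(Yr / Y^2 * (1 + Yr))^4 = y^(r-2)*(1+y^r)"
    unfolding yr2 yr by (simp add: power_mult_distrib power_divide f4 power_mult[symmetric])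
  ultimately have Zeq: "y^(r-2)*(1+y^r) = G^4 + (G^4)^2" by simp
  have "(\<Sum>j<L. (y^(r-2)*(1+y^r))^(2^j)) = G^4 + (G^4)^(2^L)" unfolding Zeq by (rule telescope[OF two])
  also have "(G^4)^(2^L) = Gs^4" unfolding hL GsE[symmetric] hsh by (simp add: power_mult[symmetric] mult.commute)
  finally have Seq: "(\<Sum>j<L. (y^(r-2)*(1+y^r))^(2^j)) = G^4 + Gs^4" .
  have I1i: "Y * (1 + Yq * iYr + G + Gs) = (1 + Yr) * (1 + W0)"
    unfolding Y_def Yq_def iYr_def G_def Gs_def Yr_def W0_def by (rule I1[OF two nzs])
  have "(1 + y^r) * Fm r sh L y = y * (1 + y^(q-r)) + y * (\<Sum>j<L. (y^(r-2)*(1+y^r))^(2^j))"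
    by (rule Fm_mult[OF two rsh sh2])
  also have "\<dots> = (Y * (1 + Yq * iYr + G + Gs))^4"
    unfolding Seq unfolding yqr unfolding yY by (simp add: f4 power_mult_distrib algebra_simps)
  also have "\<dots> = (1 + y^r) * (1 + w^2)"
    unfolding I1i yr W0w by (simp add: f4 power_mult_distrib power_mult[symmetric])
  finally have Fe: "(1 + y^r) * Fm r sh L y = (1 + y^r) * (1 + w^2)" .
  have "1 + Yr = (u+b)^2/(u^2*(1+b))" unfolding Yr_def by (rule Inz[OF two nzs])
  then have "1 + Yr \<noteq> 0" using nzs by simp
  moreover have "1 + y^r = (1 + Yr)^4" unfolding yr f4 by simp
  ultimately have "1 + y^r \<noteq> 0" by simp
  then have "Fm r sh L y = 1 + w^2" using Fe by simp
  then show "(w*u*v)^(q^2+1) + 1 + Fm r sh L ((w*u*v)^t) = 0"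
    unfolding xN y_def[symmetric] using c2_double[OF two, of "1 + w^2"] by (simp add: algebra_simps)
qed
lemma arith_bounds:
  fixes P0 e0 :: nat assumes "e0 \<le> P0"
  shows "1 + (2*Suc P0 - 2)*(4*Suc P0) < 8*(Suc P0*Suc P0) - 4*Suc P0 + 1"
    and "1 + Suc e0*(4*Suc P0-2) + 4*Suc P0*(Suc e0 - 1) < 8*(Suc P0*Suc P0) - 4*Suc P0 + 1"
proof -
  have "e0*P0 \<le> P0*P0" using assms by (rule mult_le_mono1)
  then have "P0*e0 \<le> P0*P0" by (simp add: mult.commute)
  then show "1 + Suc e0*(4*Suc P0-2) + 4*Suc P0*(Suc e0 - 1) < 8*(Suc P0*Suc P0) - 4*Suc P0 + 1"
    using assms by (simp add: algebra_simps, linarith)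
  show "1 + (2*Suc P0 - 2)*(4*Suc P0) < 8*(Suc P0*Suc P0) - 4*Suc P0 + 1"
    by (simp add: algebra_simps)
qed

lemma Fm_one: fixes sh L r :: nat assumes two: "(2::'a::field) = 0" and "odd (sh - 1)" "L \<ge> 1"
  shows "Fm r sh L (1::'a) = 0"
proof -
  have "(\<Sum>i = 0..sh-2. (1::'a)^(i*r)) = of_nat (card {0..sh-2})" by simp
  also have "card {0..sh-2} = sh - 1" using assms(2) by (cases sh) auto
  also have "(of_nat (sh-1)::'a) = 1"
  proof -
    obtain k where "sh - 1 = 2*k+1" using assms(2) oddE by blast
    then show ?thesis using two by simp
  qed
  finally have s1: "(\<Sum>i = 0..sh-2. (1::'a)^(i*r)) = 1" .
  have "(\<Sum>j<L. (1::'a)^(2^j*(r-2)) * (1 + 1^r)^(2^j-1)) = (\<Sum>j<L. if j = 0 then 1 else 0)"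
  proof (rule sum.cong)
    fix j assume "j \<in> {..<L}"
    have "(1::'a) + 1 = 0" using two by simp
    show "(1::'a)^(2^j*(r-2)) * (1 + 1^r)^(2^j-1) = (if j = 0 then 1 else 0)"
    proof (cases j)
      case (Suc n)
      have "(1::nat) \<le> 2^n" by simp
      then have "(1::nat) < 2^j" unfolding Suc power_Suc by linarith
      then have "(2::nat)^j - 1 \<noteq> 0" by simp
      then show ?thesis using \<open>(1::'a) + 1 = 0\<close> Suc by (simp add: power_0_left)
    qed simp
  qed simp
  also have "\<dots> = 1" using assms(3) by (simp add: sum.delta)
  finally have s2: "(\<Sum>j<L. (1::'a)^(2^j*(r-2)) * (1 + 1^r)^(2^j-1)) = 1" .
  show ?thesis unfolding Fm_def s1 s2 using two by simp
qed

theorem theorem4p6: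
  fixes m :: nat
  assumes "odd m" and "m \<ge> 3"
    and "card (UNIV :: 'a set) = qq m ^ 4"
  shows "{x :: 'a::{field,finite}. Q1 m x = 0} = T1 m"
proof -
  obtain k where mk: "m = 2*k+1" using assms(1) oddE by blast
  define h where "h = k - 1"
  have mh: "m = 2*h+3" using mk assms(2) unfolding h_def by simp
  define q where "q = qq m"
  define r where "r = sqrt2q m"
  define sh where "sh = sqrthq m"
  define s where "s = ss m"
  define t where "t = tt m"
  define L where "L = logsqrthq m"
  define N where "N = q^2 + 1"
  define P where "P = (2::nat)^h"
  have hq: "q = 2^(2*h+3)" unfolding q_def qq_def mh ..
  have hr: "r = 2^(h+2)" unfolding r_def sqrt2q_def mh by (simp add: numeral_3_eq_3)
  have hsh: "sh = 2^(h+1)" unfolding sh_def sqrthq_def mh by (simp add: numeral_3_eq_3)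
  have hL: "L = h+1" unfolding L_def logsqrthq_def mh by (simp add: numeral_3_eq_3)
  have hs: "s = q - r + 1" unfolding s_def ss_def q_def r_def ..
  have ht: "t = q + r + 1" unfolding t_def tt_def q_def r_def ..
  have two: "(2::'a) = 0"
    by (rule char2_card[of "4*m"]) (use assms(2,3) in \<open>simp_all add: qq_def power_mult[symmetric] mult.commute\<close>)
  have P1: "P \<ge> 1" unfolding P_def by simp
  have rP: "r = 4*P" unfolding hr P_def by (simp add: power_add)
  have shP: "sh = 2*P" unfolding hsh P_def by (simp add: power_add)
  have qP: "q = 8*(P*P)" unfolding hq P_def by (simp add: power_add power_mult[symmetric] mult_2[symmetric] power2_eq_square[symmetric])
  have rq: "r \<le> q" using P1 unfolding rP qP by simp
  have sr: "q + 1 = s + r" using rq hs by simp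
  have rr: "r * r = 2 * q" unfolding rP qP by simp
  have tsr: "t = s + 2*r" using ht sr by simp
  have "s * t + r * r = (s + r) * (s + r)" unfolding tsr by (simp add: algebra_simps)
  then have "s * t + 2 * q = (q+1)*(q+1)" using rr sr by simp
  then have stN: "s * t = N" unfolding N_def by (simp add: algebra_simps power2_eq_square)
  have spos: "s > 0" "t > 0" using hs ht by simp_all
  have Q1F: "Q1 m x = x^N + 1 + Fm r sh L (x^t)" for x :: 'a
  proof -
    have pw: "x^(a*t) = (x^t)^a" for a by (metis power_mult mult.commute)
    show ?thesis unfolding Q1_def Rpoly_def Fm_def N_def q_def[symmetric] r_def[symmetric]
        sh_def[symmetric] t_def[symmetric] L_def[symmetric] pw
      by (simp add: add.assoc)
  qed
  define f where "f = (\<lambda>(u::'a,v::'a). (u^(q-1) + inverse u^(q-1))^(q-1) * u * v)"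
  have T1U: "T1 m = Ot m \<union> f ` ((Os m - {1}) \<times> Ot m)"
    unfolding T1_def f_def q_def by auto
  have coreI: "w \<noteq> 0 \<and> (w*u*v)^t = (w*u^2)^r \<and> (w*u*v)^N = w^2 \<and> (w*u*v)^N + 1 + Fm r sh L ((w*u*v)^t) = 0"
    if "u \<in> Os m - {1}" "v \<in> Ot m" "w = (u^(q-1) + inverse u^(q-1))^(q-1)" for u v w :: 'a
  proof -
    have "u^s = 1" "u \<noteq> 1" "v^t = 1" using that unfolding Os_def Ot_def s_def t_def by auto
    note c = core[OF two hr hsh hq hL hs ht this]
    show ?thesis using c unfolding that(3) N_def by auto
  qed
  have sub: "T1 m \<subseteq> {x :: 'a. Q1 m x = 0}"
  proof
    fix x :: 'a assume "x \<in> T1 m"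
    then consider "x \<in> Ot m" | u v where "u \<in> Os m - {1}" "v \<in> Ot m" "x = f (u,v)"
      unfolding T1U by auto
    then show "x \<in> {x. Q1 m x = 0}"
    proof cases
      case 1
      then have xt: "x^t = 1" unfolding Ot_def t_def by simp
      then have "x^N = 1" unfolding stN[symmetric] by (metis power_mult mult.commute power_one)
      moreover have "Fm r sh L (1::'a) = 0"
      proof (rule Fm_one[OF two])
        show "odd (sh - 1)" unfolding hsh by simp
        show "L \<ge> 1" unfolding hL by simp
      qed
      ultimately show ?thesis using xt two by (simp add: Q1F)
    next
      case 2
      define w where "w = (u^(q-1) + inverse u^(q-1))^(q-1)"
      have xe: "x = w*u*v" using 2(3) unfolding f_def w_def by simp
      have "(w*u*v)^N + 1 + Fm r sh L ((w*u*v)^t) = 0" using coreI[OF 2(1,2) w_def] by blast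
      then have "Q1 m x = 0" unfolding Q1F xe .
      then show ?thesis by simp
    qed
  qed
  have rootbound: "card {x :: 'a. Q1 m x = 0} \<le> N"
  proof -
    define Rest :: "'a poly" where "Rest = 1 + monom 1 t * (\<Sum>i = 0..sh-2. monom 1 (i*r*t))
       + monom 1 t * (\<Sum>j<L. monom 1 (2^j*(r-2)*t) * (1 + monom 1 (r*t))^(2^j-1))"
    define QP where "QP = monom 1 N + Rest"
    have polyQP: "poly QP x = Q1 m x" for x
      unfolding QP_def Rest_def Q1_def Rpoly_def N_def q_def[symmetric] r_def[symmetric]
        sh_def[symmetric] t_def[symmetric] L_def[symmetric]
      by (simp add: poly_sum poly_monom algebra_simps)
    obtain P0 where P0: "P = Suc P0" using P1 by (cases P) auto
    have s_eq: "s = 8*(Suc P0*Suc P0) - 4*Suc P0 + 1" unfolding hs qP rP P0 ..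
    have d1: "degree (monom (1::'a) t * (\<Sum>i = 0..sh-2. monom 1 (i*r*t))) < N"
    proof -
      have "degree (\<Sum>i = 0..sh-2. monom (1::'a) (i*r*t)) \<le> (sh-2)*r*t"
        by (rule degree_sum_le) (auto intro!: order_trans[OF degree_monom_le] mult_le_mono1)
      then have "degree (monom (1::'a) t * (\<Sum>i = 0..sh-2. monom 1 (i*r*t))) \<le> t + (sh-2)*r*t"
        by (meson add_le_mono degree_monom_le degree_mult_le order_trans)
      also have "\<dots> = (1 + (sh-2)*r) * t" by (simp add: algebra_simps)
      also have "\<dots> < s * t"
        using arith_bounds(1)[of 0 P0] spos unfolding s_eq shP rP P0 by (intro mult_less_mono1) auto
      finally show ?thesis using stN by simp
    qed
    have d2: "degree (monom (1::'a) t * (\<Sum>j<L. monom 1 (2^j*(r-2)*t) * (1 + monom 1 (r*t))^(2^j-1))) < N"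
    proof -
      have bj: "degree (monom (1::'a) (2^j*(r-2)*t) * (1 + monom 1 (r*t))^(2^j-1)) \<le> (s - 1 - 1) * t"
        if "j < L" for j
      proof -
        obtain e0 where e0: "2^j = Suc e0" by (metis Suc_pred' zero_less_power zero_less_numeral)
        have "(2::nat)^j \<le> 2^h" using that hL by (intro power_increasing) auto
        then have e0P: "e0 \<le> P0" using e0 P0 P_def by simp
        have dp: "degree ((1::'a poly) + monom 1 (r*t)) \<le> r*t"
          by (rule degree_add_le) (auto intro: degree_monom_le order_trans)
        have "degree (monom (1::'a) (2^j*(r-2)*t) * (1 + monom 1 (r*t))^(2^j-1))
              \<le> 2^j*(r-2)*t + (r*t)*(2^j-1)"
          by (rule order_trans[OF degree_mult_le add_le_mono[OF degree_monom_le
                order_trans[OF degree_power_le mult_le_mono1[OF dp]]]])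
        also have "\<dots> = (2^j*(r-2) + r*(2^j-1)) * t" by (simp add: algebra_simps)
        also have "\<dots> \<le> (s - 1 - 1) * t"
          using arith_bounds(2)[OF e0P] unfolding s_eq rP P0 e0 by (intro mult_le_mono1) linarith
        finally show ?thesis .
      qed
      have "degree (\<Sum>j<L. monom (1::'a) (2^j*(r-2)*t) * (1 + monom 1 (r*t))^(2^j-1)) \<le> (s-1-1)*t"
      proof (rule degree_sum_le)
        fix j assume "j \<in> {..<L}"
        then show "degree (monom (1::'a) (2^j*(r-2)*t) * (1 + monom 1 (r*t))^(2^j-1)) \<le> (s-1-1)*t"
          by (intro bj) simp
      qed simp
      then have "degree (monom (1::'a) t * (\<Sum>j<L. monom 1 (2^j*(r-2)*t) * (1 + monom 1 (r*t))^(2^j-1)))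
                 \<le> t + (s-1-1)*t"
        by (meson add_le_mono degree_monom_le degree_mult_le order_trans)
      also have "\<dots> < s * t"
      proof -
        have "s \<ge> 2" using arith_bounds(1)[of 0 P0] unfolding s_eq by linarith
        then have "t + (s-1-1)*t = (s - 1) * t" by (cases s) (auto simp: algebra_simps)
        also have "\<dots> < s * t" using spos by simp
        finally show ?thesis .
      qed
      finally show ?thesis using stN by simp
    qed
    have dR: "degree Rest < N" unfolding Rest_def
      by (intro degree_add_less d1 d2) (use stN spos in auto)
    have degQP: "degree QP = N" unfolding QP_def
      by (subst degree_add_eq_left) (use dR in \<open>simp_all add: degree_monom_eq\<close>)
    have "QP \<noteq> 0" using degQP stN spos by (metis less_numeral_extra(3) degree_0 nat_0_less_mult_iff)
    from card_poly_roots_bound[OF this] show ?thesis unfolding polyQP degQP .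
  qed
  have q4: "card (UNIV::'a set) - 1 = (q^2 - 1) * (s * t)"
  proof -
    obtain a where a: "q^2 = Suc a" using rq hr by (cases "q^2") auto
    have "card (UNIV::'a set) = (q^2)^2" using assms(3) unfolding q_def by (simp add: power_mult[symmetric])
    then show ?thesis unfolding stN N_def a by (simp add: power2_eq_square algebra_simps)
  qed
  have cOt: "t \<le> card (Ot m :: 'a set)"
    unfolding Ot_def t_def[symmetric] by (rule roots_unity_card) (use q4 spos in auto)
  have cOs: "s \<le> card (Os m :: 'a set)"
    unfolding Os_def s_def[symmetric] by (rule roots_unity_card) (use q4 spos in auto)
  have inj: "inj_on f ((Os m - {1}) \<times> Ot m)"
  proof (rule inj_onI)
    fix p1 p2 assume p1: "p1 \<in> (Os m - {1}) \<times> Ot m" and p2: "p2 \<in> (Os m - {1}) \<times> Ot m" and eq: "f p1 = f p2"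
    obtain u v where uv: "p1 = (u,v)" by (cases p1)
    obtain u' v' where uv': "p2 = (u',v')" by (cases p2)
    define w where "w = (u^(q-1) + inverse u^(q-1))^(q-1)"
    define w' where "w' = (u'^(q-1) + inverse u'^(q-1))^(q-1)"
    have c1: "w \<noteq> 0" "(w*u*v)^t = (w*u^2)^r" "(w*u*v)^N = w^2"
      using coreI[of u v w] p1 uv w_def by auto
    have c2: "w' \<noteq> 0" "(w'*u'*v')^t = (w'*u'^2)^r" "(w'*u'*v')^N = w'^2"
      using coreI[of u' v' w'] p2 uv' w'_def by auto
    have x: "w*u*v = w'*u'*v'" using eq uv uv' w_def w'_def f_def by simp
    have "(w*u^2)^(2^(h+2)) = (w'*u'^2)^(2^(h+2))" using c1 c2 x hr by simp
    then have e1: "w*u^2 = w'*u'^2" by (rule frob_inj[OF two])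
    have "w^(2^1) = w'^(2^1)" using c1 c2 x by simp
    then have ww: "w = w'" by (rule frob_inj[OF two])
    then have "u^(2^1) = u'^(2^1)" using e1 c1 by simp
    then have uu: "u = u'" by (rule frob_inj[OF two])
    have "u^s = 1" using p1 uv unfolding Os_def s_def by auto
    then have "u \<noteq> 0" using spos by (auto simp: zero_power)
    then have "v = v'" using x ww uu c1 by simp
    then show "p1 = p2" using uv uv' uu by simp
  qed
  have disj: "Ot m \<inter> f ` ((Os m - {1}) \<times> Ot m) = {}"
  proof (rule ccontr)
    assume "Ot m \<inter> f ` ((Os m - {1}) \<times> Ot m) \<noteq> {}"
    then obtain u v where uv: "u \<in> Os m - {1}" "v \<in> Ot m" "f (u,v) \<in> Ot m" by auto
    define w where "w = (u^(q-1) + inverse u^(q-1))^(q-1)"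
    have c: "w \<noteq> 0" "(w*u*v)^t = (w*u^2)^r" "(w*u*v)^N = w^2"
      using coreI[OF uv(1,2), of w] w_def by auto
    have xt: "(w*u*v)^t = 1" using uv(3) unfolding f_def w_def Ot_def t_def by simp
    then have "(w*u*v)^N = 1" unfolding stN[symmetric] by (metis power_mult mult.commute power_one)
    then have "w^(2^1) = 1^(2^1)" using c by simp
    then have w1: "w = 1" by (rule frob_inj[OF two])
    have "(w*u^2)^(2^(h+2)) = 1^(2^(h+2))" using xt c hr by simp
    then have "w*u^2 = 1" by (rule frob_inj[OF two])
    then have "u^(2^1) = 1^(2^1)" using w1 by simp
    then have "u = 1" by (rule frob_inj[OF two])
    then show False using uv by simp
  qed
  have cardT: "card (T1 m :: 'a set) = card (Ot m :: 'a set) + (card (Os m :: 'a set) - 1) * card (Ot m :: 'a set)"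
  proof -
    have "1 \<in> (Os m :: 'a set)" unfolding Os_def by simp
    then have "card (Os m - {1} :: 'a set) = card (Os m :: 'a set) - 1" by (simp add: card_Diff_singleton)
    then show ?thesis unfolding T1U using disj inj
      by (simp add: card_Un_disjoint card_image card_cartesian_product)
  qed
  have "N \<le> card (T1 m :: 'a set)"
  proof -
    have "s * t \<le> card (Os m :: 'a set) * card (Ot m :: 'a set)" using cOs cOt by (rule mult_le_mono)
    moreover have "card (Os m :: 'a set) \<ge> 1" using cOs spos by simp
    ultimately show ?thesis unfolding cardT stN[symmetric]
      by (cases "card (Os m :: 'a set)") (auto simp: algebra_simps)
  qed
  then have "card {x :: 'a. Q1 m x = 0} \<le> card (T1 m :: 'a set)" using rootbound by simp
  then show ?thesis using sub by (intro card_seteq[symmetric]) auto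
qed
end
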